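(* Let $v$ be a nonzero vector of $\mathbb{F}_4^n$ and, for $1\le k\le n-1$, let $\tau_k$ be the number of self-orthogonal additive codes $C$ over $\mathbb{F}_4$ of length $n$ and dimension $k$ such that $v\in C^\perp\setminus C$. Then \[ \tau_k=2^k\prod_{i=1}^{k}\frac{2^{2(n-i)}-1}{2^i-1}; \] in particular $\tau_k$ does not depend on $v$.
   Context: $\mathbb{F}_4=\{0,1,\omega,\omega^2\}$ with $\omega^2=\omega+1$, $\bar x:=x^2$. Trace inner product $\langle u,v\rangle=\sum_{i}(u_i\bar v_i+\bar u_i v_i)\in\mathbb{F}_2$ on $\mathbb{F}_4^n$. An additive code of length $n$ is an $\mathbb{F}_2$-subspace of $\mathbb{F}_4^n$, with dimension meaning $\mathbb{F}_2$-dimension; $C^\perp$ is its dual under the trace inner product, and $C$ is self-orthogonal if $C\subseteq C^\perp$. *)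

theory Defs
  imports Complex_Main "HOL-Library.Function_Algebras"
begin

text \<open>The field F4 = {0, 1, w, w^2} with w^2 = w + 1.
  Additively F4 = F2^2 with 1 ~ (1,0), w ~ (0,1), w^2 ~ (1,1).\<close>

datatype f4 = Zero4 | One4 | W4 | Wsq4

fun f4_add :: "f4 \<Rightarrow> f4 \<Rightarrow> f4" where
  "f4_add Zero4 y = y"
| "f4_add x Zero4 = x"
| "f4_add One4 One4 = Zero4" | "f4_add One4 W4 = Wsq4" | "f4_add One4 Wsq4 = W4"
| "f4_add W4 One4 = Wsq4" | "f4_add W4 W4 = Zero4" | "f4_add W4 Wsq4 = One4"
| "f4_add Wsq4 One4 = W4" | "f4_add Wsq4 W4 = One4" | "f4_add Wsq4 Wsq4 = Zero4"

fun f4_mult :: "f4 \<Rightarrow> f4 \<Rightarrow> f4" where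
  "f4_mult Zero4 y = Zero4"
| "f4_mult x Zero4 = Zero4"
| "f4_mult One4 y = y"
| "f4_mult x One4 = x"
| "f4_mult W4 W4 = Wsq4" | "f4_mult W4 Wsq4 = One4"
| "f4_mult Wsq4 W4 = One4" | "f4_mult Wsq4 Wsq4 = W4"

definition f4_conj :: "f4 \<Rightarrow> f4" where
  "f4_conj x = f4_mult x x"

instantiation f4 :: ab_group_add
begin
definition zero_f4_def: "0 = Zero4"
definition plus_f4_def: "x + y = f4_add x y"
definition uminus_f4_def: "- (x::f4) = x"
definition minus_f4_def: "x - y = f4_add x (y::f4)"
instance
proof
  fix a b c :: f4
  show "a + b + c = a + (b + c)" unfolding plus_f4_def
    by (cases a; cases b; cases c) auto
  show "a + b = b + a" unfolding plus_f4_def by (cases a; cases b) auto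
  show "0 + a = a" unfolding plus_f4_def zero_f4_def by (cases a) auto
  show "- a + a = 0" unfolding plus_f4_def zero_f4_def uminus_f4_def by (cases a) auto
  show "a - b = a + - b" unfolding plus_f4_def minus_f4_def uminus_f4_def by simp
qed
end

definition vecs :: "nat \<Rightarrow> (nat \<Rightarrow> f4) set" where
  "vecs n = {x. \<forall>i\<ge>n. x i = 0}"

text \<open>Trace inner product <u,v> = sum_i (u_i bar v_i + bar u_i v_i), valued in F2 = {0,1} inside F4.\<close>
definition tr_ip :: "nat \<Rightarrow> (nat \<Rightarrow> f4) \<Rightarrow> (nat \<Rightarrow> f4) \<Rightarrow> f4" where
  "tr_ip n u v = (\<Sum>i<n. f4_mult (u i) (f4_conj (v i)) + f4_mult (f4_conj (u i)) (v i))"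

text \<open>Additive code of length n: an F2-subspace of F4^n (scalars F2, so closure under + and 0).\<close>
definition additive_code :: "nat \<Rightarrow> (nat \<Rightarrow> f4) set \<Rightarrow> bool" where
  "additive_code n C \<longleftrightarrow> C \<subseteq> vecs n \<and> 0 \<in> C \<and> (\<forall>x\<in>C. \<forall>y\<in>C. x + y \<in> C)"

definition dual_code :: "nat \<Rightarrow> (nat \<Rightarrow> f4) set \<Rightarrow> (nat \<Rightarrow> f4) set" where
  "dual_code n C = {u \<in> vecs n. \<forall>c\<in>C. tr_ip n u c = 0}"

definition self_orthogonal :: "nat \<Rightarrow> (nat \<Rightarrow> f4) set \<Rightarrow> bool" where
  "self_orthogonal n C \<longleftrightarrow> C \<subseteq> dual_code n C"

text \<open>F2-dimension k: C has an F2-basis of k elements (linearly independent over F2,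
  i.e. no nonempty subset sums to 0; and C is the F2-span, i.e. the set of subset sums).\<close>
definition f2_dim :: "(nat \<Rightarrow> f4) set \<Rightarrow> nat \<Rightarrow> bool" where
  "f2_dim C k \<longleftrightarrow> (\<exists>B. finite B \<and> card B = k \<and> B \<subseteq> C \<and>
      (\<forall>T\<subseteq>B. sum id T = 0 \<longrightarrow> T = {}) \<and> C = (\<lambda>T. sum id T) ` Pow B)"

end

theory Submission
  imports Defs
begin


definition tt :: "f4 \<Rightarrow> f4 \<Rightarrow> f4" where
  "tt a b = f4_mult a (f4_conj b) + f4_mult (f4_conj a) b"

lemma f4_all: "(\<forall>x::f4. P x) \<longleftrightarrow> P Zero4 \<and> P One4 \<and> P W4 \<and> P Wsq4"
  by (metis f4.exhaust)

lemma tt_add: "tt a (b + c) = tt a b + tt a c"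
  unfolding tt_def plus_f4_def f4_conj_def by (cases a; cases b; cases c) auto

lemma tt_sym: "tt a b = tt b a"
  unfolding tt_def plus_f4_def f4_conj_def by (cases a; cases b) auto

lemma tt_self: "tt a a = 0"
  unfolding tt_def plus_f4_def f4_conj_def zero_f4_def by (cases a) auto

lemma tt_val: "tt a b = 0 \<or> tt a b = One4"
  unfolding tt_def plus_f4_def f4_conj_def zero_f4_def by (cases a; cases b) auto

lemma tt_nz: "b \<noteq> 0 \<Longrightarrow> \<exists>a. tt a b \<noteq> 0"
  unfolding tt_def plus_f4_def f4_conj_def zero_f4_def
  by (cases b) (auto intro: exI[of _ W4] exI[of _ One4])

lemma f4_dbl[simp]: "(x::f4) + x = 0"
  unfolding plus_f4_def zero_f4_def by (cases x) auto

lemma fun_dbl[simp]: "(x::nat \<Rightarrow> f4) + x = 0"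
  by (rule ext) simp

lemma fun_cancel: "(x::nat \<Rightarrow> f4) + y + y = x"
  by (simp add: add.assoc)

lemma One4_dbl: "One4 + One4 = 0" by simp

lemma tr_ip_tt: "tr_ip n u w = (\<Sum>i<n. tt (u i) (w i))"
  unfolding tr_ip_def tt_def by simp

lemma ip_add2: "tr_ip n u (w + z) = tr_ip n u w + tr_ip n u z"
  unfolding tr_ip_tt by (simp add: tt_add sum.distrib)

lemma ip_sym: "tr_ip n u w = tr_ip n w u"
  unfolding tr_ip_tt by (simp add: tt_sym)

lemma ip_add1: "tr_ip n (w + z) u = tr_ip n w u + tr_ip n z u"
  by (metis ip_sym ip_add2)

lemma ip_self: "tr_ip n u u = 0"
  unfolding tr_ip_tt by (simp add: tt_self)

lemma ip_zero2: "tr_ip n u 0 = 0"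
  using ip_add2[of n u 0 0] by simp

lemma ip_val: "tr_ip n u w = 0 \<or> tr_ip n u w = One4"
proof -
  have "\<And>A. finite A \<Longrightarrow> (\<Sum>i\<in>A. tt (u i) (w i)) \<in> {0, One4}"
  proof -
    fix A :: "nat set" assume "finite A"
    then show "(\<Sum>i\<in>A. tt (u i) (w i)) \<in> {0, One4}"
    proof (induction A rule: finite_induct)
      case empty then show ?case by simp
    next
      case (insert x F)
      then show ?case using tt_val[of "u x" "w x"] by auto
    qed
  qed
  then show ?thesis unfolding tr_ip_tt by auto
qed

lemma ip_nondeg:
  assumes "s \<in> vecs n" "s \<noteq> 0"
  shows "\<exists>c\<in>vecs n. tr_ip n c s \<noteq> 0"
proof -
  obtain i where i: "s i \<noteq> 0" using assms(2) by (auto simp: fun_eq_iff)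
  then have "i < n" using assms(1) unfolding vecs_def by (metis (mono_tags) mem_Collect_eq not_le)
  obtain a where a: "tt a (s i) \<noteq> 0" using tt_nz[OF i] by blast
  define c where "c = (\<lambda>j. if j = i then a else (0::f4))"
  have tt0: "tt 0 b = 0" for b unfolding tt_def zero_f4_def f4_conj_def plus_f4_def by (cases b) auto
  have "c \<in> vecs n" using \<open>i < n\<close> unfolding vecs_def c_def by auto
  moreover have "tr_ip n c s = tt a (s i)"
  proof -
    have "tr_ip n c s = (\<Sum>j<n. if j = i then tt a (s i) else 0)"
      unfolding tr_ip_tt c_def by (rule sum.cong) (auto simp: tt0)
    also have "\<dots> = tt a (s i)" using \<open>i < n\<close> by simp
    finally show ?thesis .
  qed
  ultimately show ?thesis using a by (intro bexI[of _ c]) auto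
qed


type_synonym vec = "nat \<Rightarrow> f4"

definition addset :: "vec set \<Rightarrow> bool" where
  "addset A \<longleftrightarrow> 0 \<in> A \<and> (\<forall>x\<in>A. \<forall>y\<in>A. x + y \<in> A)"

definition sp :: "vec set \<Rightarrow> vec set" where
  "sp X = (\<lambda>T. sum id T) ` Pow X"

lemma sp_sub:
  assumes "finite X" "X \<subseteq> A" "addset A"
  shows "sp X \<subseteq> A"
proof
  fix y assume "y \<in> sp X"
  then obtain T where T: "T \<subseteq> X" "y = sum id T" unfolding sp_def by auto
  have "finite T" using T(1) assms(1) finite_subset by blast
  from this T(1) have "sum id T \<in> A"
  proof (induction T rule: finite_induct)
    case empty then show ?case using assms(3) unfolding addset_def by (metis sum.empty)
  next
    case (insert x F)
    have "sum id (insert x F) = x + sum id F" using sum.insert[OF insert(1,2)] by simp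
    moreover have "x \<in> A" "sum id F \<in> A" using insert assms(2) by auto
    ultimately show ?case using assms(3) unfolding addset_def by metis
  qed
  then show "y \<in> A" using T by simp
qed

lemma sp_mono: "X \<subseteq> Y \<Longrightarrow> sp X \<subseteq> sp Y"
  unfolding sp_def by auto

lemma sp_gen: "X \<subseteq> sp X"
proof
  fix x assume "x \<in> X"
  then have "{x} \<in> Pow X" by auto
  moreover have "sum id {x} = x" by simp
  ultimately show "x \<in> sp X" unfolding sp_def by (metis image_eqI)
qed

lemma sp_zero: "0 \<in> sp X"
  unfolding sp_def by (metis Pow_bottom image_eqI sum.empty)

lemma sum_sym_diff:
  fixes A B :: "vec set"
  assumes "finite A" "finite B"
  shows "sum id A + sum id B = sum id ((A - B) \<union> (B - A))"
proof -
  have a: "sum id A = sum id (A - B) + sum id (A \<inter> B)"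
    using assms by (metis add.commute sum.Int_Diff)
  have b: "sum id B = sum id (B - A) + sum id (A \<inter> B)"
    using assms by (metis add.commute inf_commute sum.Int_Diff)
  have c: "sum id ((A - B) \<union> (B - A)) = sum id (A - B) + sum id (B - A)"
    using assms by (intro sum.union_disjoint) auto
  have "sum id A + sum id B = sum id (A - B) + sum id (B - A) + (sum id (A \<inter> B) + sum id (A \<inter> B))"
    unfolding a b by (simp add: algebra_simps)
  also have "\<dots> = sum id (A - B) + sum id (B - A)" by simp
  finally show ?thesis using c by simp
qed

lemma sp_add:
  assumes "finite X" "x \<in> sp X" "y \<in> sp X"
  shows "x + y \<in> sp X"
proof -
  obtain A B where AB: "A \<subseteq> X" "B \<subseteq> X" "x = sum id A" "y = sum id B"
    using assms unfolding sp_def by auto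
  have "finite A" "finite B" using AB assms(1) finite_subset by auto
  then have "x + y = sum id ((A - B) \<union> (B - A))" using AB sum_sym_diff by simp
  moreover have "(A - B) \<union> (B - A) \<in> Pow X" using AB by auto
  ultimately show ?thesis unfolding sp_def by blast
qed

lemma sp_addset: "finite X \<Longrightarrow> addset (sp X)"
  unfolding addset_def using sp_zero sp_add by blast

lemma sp_finite: "finite X \<Longrightarrow> finite (sp X)"
  unfolding sp_def by simp

lemma sp_insert:
  assumes "finite X"
  shows "sp (insert x X) = sp X \<union> (\<lambda>y. x + y) ` sp X"
proof
  show "sp (insert x X) \<subseteq> sp X \<union> (\<lambda>y. x + y) ` sp X"
  proof
    fix z assume "z \<in> sp (insert x X)"
    then obtain T where T: "T \<subseteq> insert x X" "z = sum id T" unfolding sp_def by auto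
    have fT: "finite T" using T(1) assms finite_subset by blast
    show "z \<in> sp X \<union> (\<lambda>y. x + y) ` sp X"
    proof (cases "x \<in> T")
      case True
      then have "z = x + sum id (T - {x})" using T(2) fT by (simp add: sum.remove)
      moreover have "T - {x} \<in> Pow X" using T(1) by auto
      ultimately show ?thesis unfolding sp_def by blast
    next
      case False
      then have "T \<in> Pow X" using T(1) by auto
      then show ?thesis using T(2) unfolding sp_def by blast
    qed
  qed
next
  have fi: "finite (insert x X)" using assms by simp
  have "sp X \<subseteq> sp (insert x X)" by (rule sp_mono) auto
  moreover have "x \<in> sp (insert x X)" using sp_gen[of "insert x X"] by auto
  ultimately show "sp X \<union> (\<lambda>y. x + y) ` sp X \<subseteq> sp (insert x X)"
    using sp_add[OF fi] by auto
qed

lemma sp_card_insert: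
  assumes "finite X" "x \<notin> sp X"
  shows "card (sp (insert x X)) = 2 * card (sp X)"
proof -
  have disj: "sp X \<inter> (\<lambda>y. x + y) ` sp X = {}"
  proof (rule ccontr)
    assume "sp X \<inter> (\<lambda>y. x + y) ` sp X \<noteq> {}"
    then obtain y where y: "y \<in> sp X" "x + y \<in> sp X" by auto
    then have "x + y + y \<in> sp X" using sp_add[OF assms(1)] by blast
    then show False using assms(2) by (simp add: fun_cancel)
  qed
  have inj: "inj_on (\<lambda>y. x + y) (sp X)" by (rule inj_onI) simp
  have "card (sp (insert x X)) = card (sp X) + card ((\<lambda>y. x + y) ` sp X)"
    unfolding sp_insert[OF assms(1)]
    using disj sp_finite[OF assms(1)] by (intro card_Un_disjoint) auto
  also have "\<dots> = 2 * card (sp X)" using card_image[OF inj] by simp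
  finally show ?thesis .
qed

lemma sp_insert_mem:
  assumes "finite X" "x \<in> sp X"
  shows "sp (insert x X) = sp X"
  using sp_insert[OF assms(1)] sp_add[OF assms] assms by auto

lemma vecs_addset: "addset (vecs n)"
  unfolding addset_def vecs_def by simp

lemma UNIV_f4: "(UNIV :: f4 set) = {Zero4, One4, W4, Wsq4}"
  using f4.exhaust by auto

lemma card_vecs: "finite (vecs n) \<and> card (vecs n) = 4 ^ n"
proof (induction n)
  case 0
  have "vecs 0 = {0}" unfolding vecs_def by (auto simp: fun_eq_iff)
  then show ?case by simp
next
  case (Suc n)
  have eq: "vecs (Suc n) = (\<lambda>(x, a). x(n := a)) ` (vecs n \<times> UNIV)"
  proof
    show "vecs (Suc n) \<subseteq> (\<lambda>(x, a). x(n := a)) ` (vecs n \<times> UNIV)"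
    proof
      fix y assume y: "y \<in> vecs (Suc n)"
      have "y = (\<lambda>(x, a). x(n := a)) (y(n := 0), y n)" by simp
      moreover have "y(n := 0) \<in> vecs n" using y unfolding vecs_def by auto
      ultimately show "y \<in> (\<lambda>(x, a). x(n := a)) ` (vecs n \<times> UNIV)" by blast
    qed
  next
    show "(\<lambda>(x, a). x(n := a)) ` (vecs n \<times> UNIV) \<subseteq> vecs (Suc n)"
      unfolding vecs_def by auto
  qed
  have inj: "inj_on (\<lambda>(x, a). x(n := a)) (vecs n \<times> UNIV)"
  proof (rule inj_onI, clarify)
    fix x a y b assume xy: "x \<in> vecs n" "y \<in> vecs n" "x(n := a) = y(n := b)"
    have "a = b" using fun_cong[OF xy(3), of n] by simp
    moreover have "x = y"
    proof
      fix i show "x i = y i"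
        using fun_cong[OF xy(3), of i] xy(1,2) unfolding vecs_def by (cases "i = n") auto
    qed
    ultimately show "x = y \<and> a = b" by simp
  qed
  have c4: "card (UNIV :: f4 set) = 4" unfolding UNIV_f4 by simp
  have fU: "finite (UNIV :: f4 set)" unfolding UNIV_f4 by simp
  show ?case unfolding eq using Suc inj c4 fU
    by (simp add: card_image card_cartesian_product)
qed

lemma halving:
  assumes fin: "finite A" and ad: "addset A"
    and fadd: "\<And>x y. x \<in> A \<Longrightarrow> y \<in> A \<Longrightarrow> f (x + y) = f x + f y"
    and fval: "\<And>x. x \<in> A \<Longrightarrow> f x = 0 \<or> f x = One4"
    and a: "a \<in> A" "f a \<noteq> 0"
  shows "2 * card {x \<in> A. f x = 0} = card A"
proof -
  let ?K = "{x \<in> A. f x = 0}" and ?K' = "{x \<in> A. f x \<noteq> 0}"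
  have fa: "f a = One4" using fval[OF a(1)] a(2) by simp
  have "bij_betw (\<lambda>x. x + a) ?K ?K'"
  proof (rule bij_betw_byWitness[where f' = "\<lambda>x. x + a"])
    show "\<forall>x\<in>?K. x + a + a = x" by (simp add: fun_cancel)
    show "\<forall>x\<in>?K'. x + a + a = x" by (simp add: fun_cancel)
    show "(\<lambda>x. x + a) ` ?K \<subseteq> ?K'"
      using ad a fadd unfolding addset_def by auto
    show "(\<lambda>x. x + a) ` ?K' \<subseteq> ?K"
    proof
      fix z assume "z \<in> (\<lambda>x. x + a) ` ?K'"
      then obtain x where x: "x \<in> A" "f x \<noteq> 0" "z = x + a" by auto
      have "f x = One4" using fval[OF x(1)] x(2) by simp
      then have "f z = 0" using x fadd[OF x(1) a(1)] fa by simp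
      moreover have "z \<in> A" using ad x a unfolding addset_def by auto
      ultimately show "z \<in> ?K" by simp
    qed
  qed
  then have "card ?K = card ?K'" by (rule bij_betw_same_card)
  moreover have "card A = card ?K + card ?K'"
  proof -
    have "A = ?K \<union> ?K'" by auto
    then show ?thesis using fin by (metis (no_types, lifting) card_Un_disjoint disjoint_iff finite_Un mem_Collect_eq)
  qed
  ultimately show ?thesis by simp
qed

lemma card_filter_sum: "finite A \<Longrightarrow> card {x \<in> A. P x} = (\<Sum>x\<in>A. if P x then 1 else 0)"
  by (simp add: sum.If_cases Int_def)

lemma perp_card:
  assumes S: "S \<subseteq> vecs n" "addset S" "finite S"
  shows "card (dual_code n S) * card S = 4 ^ n"
proof -
  let ?V = "vecs n" and ?P = "dual_code n S"
  have fV: "finite ?V" and cV: "card ?V = 4 ^ n" using card_vecs by auto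
  let ?g = "\<lambda>c s. if tr_ip n c s = 0 then (1::nat) else 0"
  have sw: "(\<Sum>s\<in>S. \<Sum>c\<in>?V. ?g c s) = (\<Sum>c\<in>?V. \<Sum>s\<in>S. ?g c s)"
    by (rule sum.swap)
  have l: "2 * (\<Sum>c\<in>?V. ?g c s) = (if s = 0 then 2 * card ?V else card ?V)" if s: "s \<in> S" for s
  proof (cases "s = 0")
    case True then show ?thesis by (simp add: ip_zero2)
  next
    case False
    have sV: "s \<in> ?V" using s S by auto
    obtain a where a: "a \<in> ?V" "tr_ip n a s \<noteq> 0" using ip_nondeg[OF sV False] by blast
    have "2 * card {c \<in> ?V. tr_ip n c s = 0} = card ?V"
      by (rule halving[where f="\<lambda>c. tr_ip n c s", OF fV vecs_addset _ _ a]) (auto simp: ip_add1 ip_val)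
    then show ?thesis using False card_filter_sum[OF fV, of "\<lambda>c. tr_ip n c s = 0"] by simp
  qed
  have r: "2 * (\<Sum>s\<in>S. ?g c s) = (if c \<in> ?P then 2 * card S else card S)" if c: "c \<in> ?V" for c
  proof (cases "c \<in> ?P")
    case True then show ?thesis unfolding dual_code_def by simp
  next
    case False
    then obtain a where a: "a \<in> S" "tr_ip n c a \<noteq> 0" using c unfolding dual_code_def by auto
    have "2 * card {s \<in> S. tr_ip n c s = 0} = card S"
      by (rule halving[where f="\<lambda>s. tr_ip n c s", OF S(3) S(2) _ _ a]) (auto simp: ip_add2 ip_val)
    then show ?thesis using False card_filter_sum[OF S(3), of "\<lambda>s. tr_ip n c s = 0"] by simp
  qed
  have "2 * (\<Sum>s\<in>S. \<Sum>c\<in>?V. ?g c s) = (\<Sum>s\<in>S. if s = 0 then 2 * card ?V else card ?V)"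
    by (subst sum_distrib_left, rule sum.cong[OF refl l])
  also have "\<dots> = card ?V + card S * card ?V"
  proof -
    have z: "0 \<in> S" using S(2) unfolding addset_def by simp
    have "(\<Sum>s\<in>S. if s = 0 then 2 * card ?V else card ?V) = (\<Sum>s\<in>S. card ?V + (if s = 0 then card ?V else 0))"
      by (rule sum.cong) auto
    also have "\<dots> = card S * card ?V + card ?V"
      using S(3) z by (simp add: sum.distrib sum.delta)
    finally show ?thesis by simp
  qed
  finally have e1: "2 * (\<Sum>s\<in>S. \<Sum>c\<in>?V. ?g c s) = card ?V + card S * card ?V" .
  have "2 * (\<Sum>c\<in>?V. \<Sum>s\<in>S. ?g c s) = (\<Sum>c\<in>?V. if c \<in> ?P then 2 * card S else card S)"
    by (subst sum_distrib_left, rule sum.cong[OF refl r])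
  also have "\<dots> = (\<Sum>c\<in>?V. card S + (if c \<in> ?P then card S else 0))"
    by (rule sum.cong) auto
  also have "\<dots> = card ?V * card S + card ?P * card S"
  proof -
    have "?P \<subseteq> ?V" unfolding dual_code_def by auto
    then have "?V \<inter> ?P = ?P" by auto
    then show ?thesis using fV by (simp add: sum.distrib sum.If_cases)
  qed
  finally have e2: "2 * (\<Sum>c\<in>?V. \<Sum>s\<in>S. ?g c s) = card ?V * card S + card ?P * card S" .
  from e1 e2 sw have "card ?V = card ?P * card S" by (simp add: mult.commute)
  then show ?thesis using cV by simp
qed


fun good :: "(vec list \<Rightarrow> vec \<Rightarrow> bool) \<Rightarrow> vec list \<Rightarrow> bool" where
  "good Q [] = True"
| "good Q (x # xs) = (good Q xs \<and> Q xs x)"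

lemma count_good:
  assumes "\<And>j xs. j < k \<Longrightarrow> length xs = j \<Longrightarrow> good Q xs \<Longrightarrow>
      finite {x. Q xs x} \<and> card {x. Q xs x} = f j"
  shows "finite {xs. length xs = k \<and> good Q xs} \<and> card {xs. length xs = k \<and> good Q xs} = (\<Prod>j<k. f j)"
  using assms
proof (induction k)
  case 0
  have "{xs. length xs = 0 \<and> good Q xs} = {[]}" by auto
  then show ?case by simp
next
  case (Suc k)
  let ?L = "{xs. length xs = k \<and> good Q xs}"
  have "finite {x. Q xs x} \<and> card {x. Q xs x} = f j"
    if "j < k" "length xs = j" "good Q xs" for j xs using Suc.prems[of j xs] that by simp
  then have IH: "finite ?L \<and> card ?L = (\<Prod>j<k. f j)" by (rule Suc.IH)
  have eq: "{xs. length xs = Suc k \<and> good Q xs} = (\<lambda>(xs, x). x # xs) ` (SIGMA xs:?L. {x. Q xs x})"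
  proof
    show "{xs. length xs = Suc k \<and> good Q xs} \<subseteq> (\<lambda>(xs, x). x # xs) ` (SIGMA xs:?L. {x. Q xs x})"
    proof
      fix zs assume "zs \<in> {xs. length xs = Suc k \<and> good Q xs}"
      then obtain x xs where "zs = x # xs" "length xs = k" "good Q xs" "Q xs x"
        by (cases zs) auto
      then show "zs \<in> (\<lambda>(xs, x). x # xs) ` (SIGMA xs:?L. {x. Q xs x})" by force
    qed
  qed auto
  have inj: "inj_on (\<lambda>(xs, x). x # xs) (SIGMA xs:?L. {x. Q xs x})"
    by (rule inj_onI) auto
  have fin: "\<forall>a\<in>?L. finite {x. Q a x}" using Suc.prems by auto
  have cs: "card (SIGMA xs:?L. {x. Q xs x}) = (\<Sum>a\<in>?L. card {x. Q a x})"
    using IH fin by (intro card_SigmaI) auto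
  also have "\<dots> = (\<Sum>a\<in>?L. f k)" using Suc.prems by (intro sum.cong) auto
  also have "\<dots> = card ?L * f k" by simp
  finally have "card {xs. length xs = Suc k \<and> good Q xs} = card ?L * f k"
    unfolding eq using card_image[OF inj] by simp
  moreover have "finite {xs. length xs = Suc k \<and> good Q xs}"
    unfolding eq using IH fin by auto
  ultimately show ?case using IH by (simp add: mult.commute)
qed

definition ci :: "vec list \<Rightarrow> bool" where
  "ci = good (\<lambda>ys x. x \<notin> sp (set ys))"

lemma sp_empty: "sp {} = {0}"
  unfolding sp_def by simp

lemma ci_card: "ci xs \<Longrightarrow> card (sp (set xs)) = 2 ^ length xs \<and> distinct xs"
proof (induction xs)
  case Nil then show ?case by (simp add: sp_empty)
next
  case (Cons x xs)
  then have h: "ci xs" "x \<notin> sp (set xs)" unfolding ci_def by auto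
  then have "x \<notin> set xs" using sp_gen by blast
  then show ?case using Cons.IH[OF h(1)] sp_card_insert[OF _ h(2)] by simp
qed

lemma ci_dim: assumes "ci xs" shows "f2_dim (sp (set xs)) (length xs)"
proof -
  let ?B = "set xs"
  have c: "card (sp ?B) = 2 ^ length xs" and d: "distinct xs" using ci_card[OF assms] by auto
  have cB: "card ?B = length xs" using d by (simp add: distinct_card)
  have inj: "inj_on (\<lambda>T. sum id T) (Pow ?B)"
    using c cB unfolding sp_def by (simp add: inj_on_iff_eq_card card_Pow)
  have ind: "\<forall>T\<subseteq>?B. sum id T = 0 \<longrightarrow> T = {}"
  proof (intro allI impI)
    fix T assume "T \<subseteq> ?B" "sum id T = 0"
    then show "T = {}" using inj_onD[OF inj, of T "{}"] by simp
  qed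
  show ?thesis unfolding f2_dim_def
    using cB sp_gen[of ?B] ind by (intro exI[of _ ?B]) (auto simp: sp_def)
qed

lemma dim_card: assumes "f2_dim C k" shows "finite C \<and> card C = 2 ^ k"
proof -
  obtain B where B: "finite B" "card B = k" "\<forall>T\<subseteq>B. sum id T = 0 \<longrightarrow> T = {}"
     "C = (\<lambda>T. sum id T) ` Pow B" using assms unfolding f2_dim_def by blast
  have "inj_on (\<lambda>T. sum id T) (Pow B)"
  proof (rule inj_onI)
    fix T1 T2 assume T: "T1 \<in> Pow B" "T2 \<in> Pow B" "sum id T1 = sum id T2"
    have f: "finite T1" "finite T2" using T B(1) finite_subset by auto
    have "sum id ((T1 - T2) \<union> (T2 - T1)) = 0"
      using sum_sym_diff[OF f] T(3) by simp
    moreover have "(T1 - T2) \<union> (T2 - T1) \<subseteq> B" using T by auto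
    ultimately have "(T1 - T2) \<union> (T2 - T1) = {}" using B(3) by blast
    then show "T1 = T2" by auto
  qed
  then show ?thesis using B by (simp add: card_image card_Pow)
qed

lemma orth_sp:
  assumes "finite X" "\<forall>x\<in>X. tr_ip n u x = 0"
  shows "\<forall>y\<in>sp X. tr_ip n u y = 0"
proof -
  have "addset {y. tr_ip n u y = 0}" unfolding addset_def by (simp add: ip_zero2 ip_add2)
  then have "sp X \<subseteq> {y. tr_ip n u y = 0}" using assms by (intro sp_sub) auto
  then show ?thesis by auto
qed

lemma iso_sp:
  assumes "finite X" "\<forall>a\<in>X. \<forall>b\<in>X. tr_ip n a b = 0"
  shows "\<forall>a\<in>sp X. \<forall>b\<in>sp X. tr_ip n a b = 0"
proof -
  have "\<forall>a\<in>X. \<forall>b\<in>sp X. tr_ip n a b = 0" using orth_sp[OF assms(1)] assms(2) by blast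
  then have "\<forall>b\<in>sp X. \<forall>a\<in>X. tr_ip n b a = 0" by (metis ip_sym)
  then have "\<forall>b\<in>sp X. \<forall>a\<in>sp X. tr_ip n b a = 0" using orth_sp[OF assms(1)] by blast
  then show ?thesis by (metis ip_sym)
qed


definition Q1 :: "nat \<Rightarrow> vec \<Rightarrow> vec list \<Rightarrow> vec \<Rightarrow> bool" where
  "Q1 n v ys x \<longleftrightarrow> x \<in> dual_code n (sp (insert v (set ys))) \<and> x \<notin> sp (insert v (set ys))"

definition Q2 :: "vec set \<Rightarrow> vec list \<Rightarrow> vec \<Rightarrow> bool" where
  "Q2 C ys x \<longleftrightarrow> x \<in> C \<and> x \<notin> sp (set ys)"

lemma inv1:
  assumes v: "v \<in> vecs n" "v \<noteq> 0"
  shows "good (Q1 n v) xs \<Longrightarrow> card (sp (insert v (set xs))) = 2 ^ Suc (length xs) \<and> ci xs \<and>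
     set xs \<subseteq> vecs n \<and> (\<forall>a\<in>insert v (set xs). \<forall>b\<in>insert v (set xs). tr_ip n a b = 0)"
proof (induction xs)
  case Nil
  have "v \<notin> sp {}" using v by (simp add: sp_empty)
  then have "card (sp {v}) = 2" using sp_card_insert[of "{}" v] by (simp add: sp_empty)
  then show ?case by (simp add: ci_def ip_self)
next
  case (Cons x xs)
  let ?X = "insert v (set xs)"
  have g: "good (Q1 n v) xs" and q: "Q1 n v xs x" using Cons.prems by auto
  note IH = Cons.IH[OF g]
  have xD: "x \<in> vecs n" "\<forall>c\<in>sp ?X. tr_ip n x c = 0" "x \<notin> sp ?X"
    using q unfolding Q1_def dual_code_def by auto
  have c: "card (sp (insert x ?X)) = 2 * card (sp ?X)" using sp_card_insert[OF _ xD(3)] by simp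
  have "x \<notin> sp (set xs)" using xD(3) sp_mono[of "set xs" ?X] by auto
  then have ci: "ci (x # xs)" using IH unfolding ci_def by simp
  have xo: "\<forall>c\<in>?X. tr_ip n x c = 0" using xD(2) sp_gen[of ?X] by auto
  have "\<forall>a\<in>insert x ?X. \<forall>b\<in>insert x ?X. tr_ip n a b = 0"
    using IH xo by (auto simp: ip_self) (metis ip_sym)+
  then show ?case using IH c ci xD(1) by (simp add: insert_commute)
qed

lemma pow_cancel:
  assumes "(a::nat) * 2 ^ b = 2 ^ c"
  shows "a = 2 ^ (c - b)"
proof -
  have "b \<le> c"
  proof (rule ccontr)
    assume "\<not> b \<le> c"
    have "a \<noteq> 0" using assms by (metis mult_is_0 power_not_zero zero_neq_numeral)
    then have "2 ^ b \<le> a * 2 ^ b" by simp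
    moreover have "(2::nat) ^ c < 2 ^ b" using \<open>\<not> b \<le> c\<close> by simp
    ultimately show False using assms by simp
  qed
  then have "(2::nat) ^ c = 2 ^ (c - b) * 2 ^ b" by (simp add: power_add[symmetric])
  then show ?thesis using assms by simp
qed

lemma ext_count1:
  assumes v: "v \<in> vecs n" "v \<noteq> 0" and g: "good (Q1 n v) ys" and j: "length ys = j"
  shows "finite {x. Q1 n v ys x} \<and> card {x. Q1 n v ys x} = 2 ^ (2 * n - Suc j) - 2 ^ Suc j"
proof -
  let ?X = "insert v (set ys)"
  let ?S = "sp ?X"
  note I = inv1[OF v g]
  have XV: "?X \<subseteq> vecs n" using I v by auto
  have SV: "?S \<subseteq> vecs n" by (rule sp_sub[OF _ XV vecs_addset]) simp
  have adS: "addset ?S" and fS: "finite ?S" using sp_addset sp_finite by auto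
  have cS: "card ?S = 2 ^ Suc j" using I j by simp
  have iso: "\<forall>a\<in>?S. \<forall>b\<in>?S. tr_ip n a b = 0" using iso_sp[of ?X n] I by simp
  have SD: "?S \<subseteq> dual_code n ?S" using iso SV unfolding dual_code_def by auto
  have "card (dual_code n ?S) * 2 ^ Suc j = 2 ^ (2 * n)"
    using perp_card[OF SV adS fS] cS by (simp add: power_mult)
  then have cD: "card (dual_code n ?S) = 2 ^ (2 * n - Suc j)" by (rule pow_cancel)
  have fD: "finite (dual_code n ?S)" using card_vecs[of n] unfolding dual_code_def
    by (metis (no_types, lifting) mem_Collect_eq rev_finite_subset subsetI)
  have eq: "{x. Q1 n v ys x} = dual_code n ?S - ?S" unfolding Q1_def by auto
  show ?thesis unfolding eq using fD cD cS SD by (simp add: card_Diff_subset fS)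
qed

lemma Q1_Q2: "good (Q1 n v) xs \<Longrightarrow> set xs \<subseteq> C \<Longrightarrow> good (Q2 C) xs"
proof (induction xs)
  case Nil then show ?case by simp
next
  case (Cons x xs)
  then have "x \<notin> sp (set xs)" using sp_mono[of "set xs" "insert v (set xs)"]
    unfolding Q1_def by auto
  then show ?case using Cons unfolding Q2_def by auto
qed

lemma Q2_ci: "good (Q2 C) xs \<Longrightarrow> ci xs \<and> set xs \<subseteq> C"
  by (induction xs) (auto simp: ci_def Q2_def)

lemma Q2_Q1:
  assumes C: "additive_code n C" "self_orthogonal n C" "v \<in> dual_code n C - C"
  shows "good (Q2 C) xs \<Longrightarrow> good (Q1 n v) xs"
proof (induction xs)
  case Nil then show ?case by simp
next
  case (Cons x xs)
  have g: "good (Q2 C) xs" and xC: "x \<in> C" and xn: "x \<notin> sp (set xs)"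
    using Cons.prems unfolding Q2_def by auto
  have sC: "set xs \<subseteq> C" using Q2_ci[OF g] by simp
  have adC: "addset C" using C(1) unfolding additive_code_def addset_def by auto
  have spC: "sp (set xs) \<subseteq> C" by (rule sp_sub[OF _ sC adC]) simp
  have xV: "x \<in> vecs n" using xC C(1) unfolding additive_code_def by auto
  have xD: "x \<in> dual_code n C" using xC C(2) unfolding self_orthogonal_def by auto
  have "\<forall>c\<in>insert v (set xs). tr_ip n x c = 0"
  proof
    fix c assume "c \<in> insert v (set xs)"
    then show "tr_ip n x c = 0"
    proof
      assume "c = v"
      then show ?thesis using C(3) xC unfolding dual_code_def by (auto simp: ip_sym)
    next
      assume "c \<in> set xs"
      then show ?thesis using xD sC unfolding dual_code_def by auto
    qed
  qed
  then have o: "\<forall>c\<in>sp (insert v (set xs)). tr_ip n x c = 0" by (intro orth_sp) auto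
  have "x \<notin> sp (insert v (set xs))"
  proof
    assume "x \<in> sp (insert v (set xs))"
    then obtain p where p: "p \<in> sp (set xs)" "x = v + p"
      using xn unfolding sp_insert[of "set xs" v, OF finite_set] by auto
    then have "v = x + p" by (simp add: fun_cancel)
    moreover have "x + p \<in> C" using adC xC p spC unfolding addset_def by auto
    ultimately show False using C(3) by simp
  qed
  then have "Q1 n v xs x" unfolding Q1_def dual_code_def using o xV by auto
  then show ?case using Cons.IH[OF g] by simp
qed


lemma arith_final:
  fixes T n k :: nat
  assumes kn: "k \<le> n - 1" and "1 \<le> k"
    and eq: "T * (\<Prod>j<k. (2::nat) ^ k - 2 ^ j) = (\<Prod>j<k. (2::nat) ^ (2 * n - Suc j) - 2 ^ Suc j)"
  shows "real T = 2 ^ k * (\<Prod>i=1..k. (2 ^ (2 * (n - i)) - 1) / (2 ^ i - 1))"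
proof -
  define E where "E = (\<Prod>j<k. (2::nat) ^ j)"
  define P1 where "P1 = (\<Prod>i=1..k. (2::nat) ^ (2 * (n - i)) - 1)"
  define P0 where "P0 = (\<Prod>i=1..k. (2::nat) ^ i - 1)"
  have A: "(\<Prod>j<k. (2::nat) ^ (2 * n - Suc j) - 2 ^ Suc j) = 2 ^ k * E * P1"
  proof -
    have "(\<Prod>j<k. (2::nat) ^ (2 * n - Suc j) - 2 ^ Suc j) = (\<Prod>j<k. 2 * 2 ^ j * (2 ^ (2 * (n - Suc j)) - 1))"
    proof (rule prod.cong[OF refl])
      fix j assume "j \<in> {..<k}"
      then have "2 * n - Suc j = Suc j + 2 * (n - Suc j)" using kn by auto
      then have "(2::nat) ^ (2 * n - Suc j) = 2 ^ Suc j * 2 ^ (2 * (n - Suc j))"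
        by (metis power_add)
      then show "(2::nat) ^ (2 * n - Suc j) - 2 ^ Suc j = 2 * 2 ^ j * (2 ^ (2 * (n - Suc j)) - 1)"
        by (simp only: diff_mult_distrib2 mult_1_right power_Suc)
    qed
    also have "\<dots> = 2 ^ k * E * (\<Prod>j<k. 2 ^ (2 * (n - Suc j)) - 1)"
      unfolding E_def by (simp add: prod.distrib)
    also have "(\<Prod>j<k. (2::nat) ^ (2 * (n - Suc j)) - 1) = P1"
      unfolding P1_def by (simp add: prod.atLeast1_atMost_eq)
    finally show ?thesis .
  qed
  have N: "(\<Prod>j<k. (2::nat) ^ k - 2 ^ j) = E * P0"
  proof -
    have "(\<Prod>j<k. (2::nat) ^ k - 2 ^ j) = (\<Prod>j<k. 2 ^ j * (2 ^ (k - j) - 1))"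
    proof (rule prod.cong[OF refl])
      fix j assume "j \<in> {..<k}"
      then have "k = j + (k - j)" by auto
      then have "(2::nat) ^ k = 2 ^ j * 2 ^ (k - j)" by (metis power_add)
      then show "(2::nat) ^ k - 2 ^ j = 2 ^ j * (2 ^ (k - j) - 1)"
        by (simp add: diff_mult_distrib2)
    qed
    also have "\<dots> = E * (\<Prod>j<k. 2 ^ (k - j) - 1)"
      unfolding E_def by (simp add: prod.distrib)
    also have "(\<Prod>j<k. (2::nat) ^ (k - j) - 1) = (\<Prod>j<k. 2 ^ Suc (k - Suc j) - 1)"
      by (rule prod.cong[OF refl]) (simp add: Suc_diff_Suc)
    also have "\<dots> = (\<Prod>j<k. 2 ^ Suc j - 1)"
      by (rule prod.nat_diff_reindex[where g = "\<lambda>i. (2::nat) ^ Suc i - 1"])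
    also have "\<dots> = P0" unfolding P0_def by (simp add: prod.atLeast1_atMost_eq)
    finally show ?thesis .
  qed
  have Epos: "E > 0" unfolding E_def by simp
  have P0pos: "P0 > 0" unfolding P0_def by (intro prod_pos) (metis One_nat_def Suc_le_eq atLeastAtMost_iff diff_is_0_eq le_zero_eq less_one not_less one_less_numeral_iff one_less_power semiring_norm(76) zero_less_diff)
  have "T * E * P0 = 2 ^ k * E * P1" using eq A N by (simp add: mult.assoc)
  then have "T * P0 = 2 ^ k * P1" using Epos by (simp add: mult.commute mult.left_commute)
  then have "real T * real P0 = 2 ^ k * real P1" by (metis of_nat_mult of_nat_numeral of_nat_power)
  then have "real T = 2 ^ k * real P1 / real P0" using P0pos by (simp add: field_simps)
  moreover have "real P1 = (\<Prod>i=1..k. (2 ^ (2 * (n - i)) - 1 :: real))"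
    unfolding P1_def by (simp add: of_nat_prod of_nat_diff)
  moreover have "real P0 = (\<Prod>i=1..k. (2 ^ i - 1 :: real))"
    unfolding P0_def by (simp add: of_nat_prod of_nat_diff)
  ultimately show ?thesis by (simp add: prod_dividef)
qed


theorem lemmaA3:
  fixes n k :: nat and v :: "nat \<Rightarrow> f4"
  assumes "v \<in> vecs n" and "v \<noteq> 0" and "1 \<le> k" and "k \<le> n - 1"
  shows "real (card {C. additive_code n C \<and> self_orthogonal n C \<and> f2_dim C k \<and>
                        v \<in> dual_code n C - C})
         = 2 ^ k * (\<Prod>i=1..k. (2 ^ (2 * (n - i)) - 1) / (2 ^ i - 1))"
proof -
  let ?T = "{C. additive_code n C \<and> self_orthogonal n C \<and> f2_dim C k \<and> v \<in> dual_code n C - C}"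
  let ?L = "{xs. length xs = k \<and> good (Q1 n v) xs}"
  let ?N = "(\<Prod>j<k. (2::nat) ^ k - 2 ^ j)"
  have L: "finite ?L \<and> card ?L = (\<Prod>j<k. 2 ^ (2 * n - Suc j) - 2 ^ Suc j)"
    by (rule count_good) (use ext_count1[OF assms(1,2)] in blast)
  have inT: "sp (set xs) \<in> ?T" if xs: "xs \<in> ?L" for xs
  proof -
    let ?X = "set xs"
    have g: "good (Q1 n v) xs" and lk: "length xs = k" using xs by auto
    note I = inv1[OF assms(1,2) g]
    have XV: "?X \<subseteq> vecs n" using I by auto
    have SV: "sp ?X \<subseteq> vecs n" by (rule sp_sub[OF _ XV vecs_addset]) simp
    have ad: "additive_code n (sp ?X)"
      using SV sp_addset[of ?X] unfolding additive_code_def addset_def by auto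
    have iso: "\<forall>a\<in>sp ?X. \<forall>b\<in>sp ?X. tr_ip n a b = 0" using iso_sp[of ?X n] I by simp
    have so: "self_orthogonal n (sp ?X)"
      unfolding self_orthogonal_def dual_code_def using iso SV by auto
    have dim: "f2_dim (sp ?X) k" using ci_dim[of xs] I lk by simp
    have vo: "\<forall>y\<in>sp ?X. tr_ip n v y = 0" using I by (intro orth_sp) auto
    have vn: "v \<notin> sp ?X"
    proof
      assume "v \<in> sp ?X"
      then have "sp (insert v ?X) = sp ?X" by (simp add: sp_insert_mem)
      then show False using I ci_card[of xs] by simp
    qed
    show ?thesis using ad so dim vo vn assms(1) unfolding dual_code_def by auto
  qed
  have fib: "{xs \<in> ?L. sp (set xs) = C} = {xs. length xs = k \<and> good (Q2 C) xs}"
    if C: "C \<in> ?T" for C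
  proof -
    have C': "additive_code n C" "self_orthogonal n C" "v \<in> dual_code n C - C" "f2_dim C k"
      using C by auto
    have cC: "finite C" "card C = 2 ^ k" using dim_card[OF C'(4)] by auto
    have adC: "addset C" using C'(1) unfolding additive_code_def addset_def by auto
    show ?thesis
    proof
      show "{xs \<in> ?L. sp (set xs) = C} \<subseteq> {xs. length xs = k \<and> good (Q2 C) xs}"
        using Q1_Q2 sp_gen by fastforce
    next
      show "{xs. length xs = k \<and> good (Q2 C) xs} \<subseteq> {xs \<in> ?L. sp (set xs) = C}"
      proof
        fix xs assume xs: "xs \<in> {xs. length xs = k \<and> good (Q2 C) xs}"
        then have g: "good (Q2 C) xs" and lk: "length xs = k" by auto
        have g1: "good (Q1 n v) xs" using Q2_Q1[OF C'(1-3) g] .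
        have ci: "ci xs" and sC: "set xs \<subseteq> C" using Q2_ci[OF g] by auto
        have spC: "sp (set xs) \<subseteq> C" by (rule sp_sub[OF _ sC adC]) simp
        have "card (sp (set xs)) = card C" using ci_card[OF ci] lk cC by simp
        then have "sp (set xs) = C" using card_subset_eq[OF cC(1) spC] by simp
        then show "xs \<in> {xs \<in> ?L. sp (set xs) = C}" using g1 lk by simp
      qed
    qed
  qed
  have fibc: "finite {xs \<in> ?L. sp (set xs) = C} \<and> card {xs \<in> ?L. sp (set xs) = C} = ?N"
    if C: "C \<in> ?T" for C
  proof -
    have C': "additive_code n C" "f2_dim C k" using C by auto
    have cC: "finite C" "card C = 2 ^ k" using dim_card[OF C'(2)] by auto
    have adC: "addset C" using C'(1) unfolding additive_code_def addset_def by auto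
    have "finite {xs. length xs = k \<and> good (Q2 C) xs} \<and> card {xs. length xs = k \<and> good (Q2 C) xs} = ?N"
    proof (rule count_good)
      fix j ys assume "j < k" "length ys = j" "good (Q2 C) ys"
      then have ci: "ci ys" and sC: "set ys \<subseteq> C" and lj: "length ys = j" using Q2_ci by auto
      have spC: "sp (set ys) \<subseteq> C" by (rule sp_sub[OF _ sC adC]) simp
      have eq: "{x. Q2 C ys x} = C - sp (set ys)" unfolding Q2_def using spC by auto
      show "finite {x. Q2 C ys x} \<and> card {x. Q2 C ys x} = 2 ^ k - 2 ^ j"
        unfolding eq using cC spC ci_card[OF ci] lj
        by (simp add: card_Diff_subset sp_finite)
    qed
    then show ?thesis using fib[OF C] by simp
  qed
  have finT: "finite ?T"
  proof (rule finite_subset[of _ "Pow (vecs n)"])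
    show "?T \<subseteq> Pow (vecs n)" unfolding additive_code_def by auto
    show "finite (Pow (vecs n))" using card_vecs by simp
  qed
  have Leq: "?L = (\<Union>C\<in>?T. {xs \<in> ?L. sp (set xs) = C})" using inT by blast
  have "card ?L = (\<Sum>C\<in>?T. card {xs \<in> ?L. sp (set xs) = C})"
    by (subst Leq, rule card_UN_disjoint[OF finT]) (use fibc in auto)
  also have "\<dots> = (\<Sum>C\<in>?T. ?N)" using fibc by (intro sum.cong) auto
  also have "\<dots> = card ?T * ?N" by simp
  finally have "card ?T * ?N = (\<Prod>j<k. 2 ^ (2 * n - Suc j) - 2 ^ Suc j)" using L by simp
  then show ?thesis using arith_final[OF assms(4,3)] by blast
qed

end
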